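(* For $\alpha,\epsilon\in\mathbb{C}$ with $\epsilon=0$ or $\epsilon^{-1}\notin\mathbb{Z}$, let $f(m,n)=\frac{(\alpha+n+\alpha\epsilon m)(1+\epsilon n)}{1+\epsilon(m+n)}$ for $m,n\in\mathbb{Z}$ (the structure constants of the left-symmetric algebra $V_{\alpha,\epsilon}$ on the Witt algebra with basis $\{x_n\}$, $x_mx_n=f(m,n)x_{m+n}$). Consider functions $\omega:\mathbb{Z}\times\mathbb{Z}\to\mathbb{C}$ satisfying, for all $m,n,l\in\mathbb{Z}$, $$\omega(m,n)-\omega(n,m)=\tfrac{1}{12}(n^3-n)\delta_{m+n,0},\qquad (n-m)\omega(m+n,l)=\omega(m,n+l)f(n,l)-\omega(n,m+l)f(m,l).$$ If $\alpha\neq0$ or $\epsilon=0$, no such $\omega$ exists. If $\alpha=0$, $\epsilon\neq0$ and $\epsilon^{-1}\notin\mathbb{Z}$, there is exactly one such $\omega$, namely $$\omega(m,n)=\tfrac{1}{24}\big(n^3-n-(\epsilon-\epsilon^{-1})n^2\big)\delta_{m+n,0}.$$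
   Context: These conditions on $\omega$ are exactly the conditions for the product $\theta\theta=x_m\theta=\theta x_m=0$, $x_mx_n=f(m,n)x_{m+n}+\omega(m,n)\theta$ on $V_{\alpha,\epsilon}\oplus\mathbb{C}\theta$ to be a left-symmetric algebra (i.e. $(xy)z-x(yz)=(yx)z-y(xz)$) whose commutator is the Virasoro bracket $[x_m,x_n]=(n-m)x_{m+n}+\delta_{m+n,0}\frac{n^3-n}{12}\theta$, $[\theta,x_n]=0$. *)

theory Defs
  imports Complex_Main
begin

definition lsa_f :: "complex \<Rightarrow> complex \<Rightarrow> int \<Rightarrow> int \<Rightarrow> complex" where
  "lsa_f \<alpha> \<epsilon> m n =
     ((\<alpha> + of_int n + \<alpha> * \<epsilon> * of_int m) * (1 + \<epsilon> * of_int n)) / (1 + \<epsilon> * of_int (m + n))"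

definition kdelta :: "int \<Rightarrow> int \<Rightarrow> complex" where
  "kdelta a b = (if a = b then 1 else 0)"

definition cocycle_cond :: "complex \<Rightarrow> complex \<Rightarrow> (int \<Rightarrow> int \<Rightarrow> complex) \<Rightarrow> bool" where
  "cocycle_cond \<alpha> \<epsilon> \<omega> \<longleftrightarrow>
     (\<forall>m n. \<omega> m n - \<omega> n m = (1/12) * (of_int n ^ 3 - of_int n) * kdelta (m + n) 0) \<and>
     (\<forall>m n l. (of_int n - of_int m) * \<omega> (m + n) l =
              \<omega> m (n + l) * lsa_f \<alpha> \<epsilon> n l - \<omega> n (m + l) * lsa_f \<alpha> \<epsilon> m l)"

end

theory Submission
  imports Defs
begin


lemma nzk:
  fixes \<epsilon> :: complex
  assumes "\<epsilon> = 0 \<or> inverse \<epsilon> \<notin> \<int>"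
  shows "1 + \<epsilon> * of_int k \<noteq> 0"
proof
  assume h: "1 + \<epsilon> * of_int k = 0"
  then have e: "\<epsilon> \<noteq> 0" by auto
  have k: "of_int k \<noteq> (0::complex)" using h by auto
  have "inverse \<epsilon> = - of_int k" using h e k by (simp add: field_simps inverse_eq_divide) (metis add.commute add_eq_0_iff)
  then have "inverse \<epsilon> \<in> \<int>" by simp
  then show False using assms e by simp
qed

lemma f_l0: assumes "\<And>k. 1 + \<epsilon> * of_int k \<noteq> 0" shows "lsa_f \<alpha> \<epsilon> n 0 = \<alpha>"
proof -
  have "1 + \<epsilon> * of_int n \<noteq> 0" by (rule assms)
  then show ?thesis unfolding lsa_f_def by (simp add: field_simps)
qed

lemma f_a0: "lsa_f 0 \<epsilon> n l = of_int l * (1 + \<epsilon> * of_int l) / (1 + \<epsilon> * of_int (n + l))"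
  unfolding lsa_f_def by simp

lemma no_alpha:
  assumes nz: "\<And>k. 1 + \<epsilon> * of_int k \<noteq> 0" and a: "\<alpha> \<noteq> 0" and c: "cocycle_cond \<alpha> \<epsilon> \<omega>"
  shows False
proof -
  from c have S: "\<And>m n. \<omega> m n - \<omega> n m = (1/12) * (of_int n ^ 3 - of_int n) * kdelta (m + n) 0"
   and E: "\<And>m n l. (of_int n - of_int m) * \<omega> (m + n) l =
              \<omega> m (n + l) * lsa_f \<alpha> \<epsilon> n l - \<omega> n (m + l) * lsa_f \<alpha> \<epsilon> m l"
    unfolding cocycle_cond_def by blast+
  have fl: "\<And>n. lsa_f \<alpha> \<epsilon> n 0 = \<alpha>" using nz by (rule f_l0)
  have e1: "2 * \<omega> 0 0 = \<alpha> * (\<omega> (-1) 1 - \<omega> 1 (-1))" using E[of "-1" 1 0] fl by (simp add: algebra_simps)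
  have e2: "4 * \<omega> 0 0 = \<alpha> * (\<omega> (-2) 2 - \<omega> 2 (-2))" using E[of "-2" 2 0] fl by (simp add: algebra_simps)
  have s1: "\<omega> (-1) 1 - \<omega> 1 (-1) = 0" using S[of "-1" 1] by (simp add: kdelta_def)
  have s2: "\<omega> (-2) 2 - \<omega> 2 (-2) = 1/2" using S[of "-2" 2] by (simp add: kdelta_def)
  from e1 s1 have "\<omega> 0 0 = 0" by simp
  with e2 s2 a show False by simp
qed

lemma no_eps:
  assumes c: "cocycle_cond 0 0 \<omega>"
  shows False
proof -
  from c have S: "\<And>m n. \<omega> m n - \<omega> n m = (1/12) * (of_int n ^ 3 - of_int n) * kdelta (m + n) 0"
   and E: "\<And>m n l. (of_int n - of_int m) * \<omega> (m + n) l =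
              \<omega> m (n + l) * lsa_f 0 0 n l - \<omega> n (m + l) * lsa_f 0 0 m l"
    unfolding cocycle_cond_def by blast+
  have f: "\<And>n l. lsa_f 0 0 n l = of_int l" unfolding lsa_f_def by simp
  have e1: "-3 * \<omega> 1 (-1) = - \<omega> 2 (-2) + \<omega> (-1) 1" using E[of 2 "-1" "-1"] f by (simp add: algebra_simps)
  have e2: "-3 * \<omega> (-1) 1 = \<omega> 1 (-1) - \<omega> (-2) 2" using E[of 1 "-2" 1] f by (simp add: algebra_simps)
  have s1: "\<omega> 1 (-1) - \<omega> (-1) 1 = 0" using S[of 1 "-1"] by (simp add: kdelta_def)
  have s2: "\<omega> 2 (-2) - \<omega> (-2) 2 = -1/2" using S[of 2 "-2"] by (simp add: kdelta_def)
  from e1 e2 s1 s2 show False by (simp add: algebra_simps)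
qed

lemma iden:
  fixes x y e :: complex
  assumes e: "e \<noteq> 0" and a: "1 - e*x \<noteq> 0" and b: "1 - e*y \<noteq> 0"
  shows "(y - x) * ((1/24) * ((-(x+y))^3 - (-(x+y)) - (e - inverse e) * (-(x+y))^2)) =
     ((1/24) * ((-x)^3 - (-x) - (e - inverse e) * (-x)^2)) * ((-x-y) * (1 + e*(-x-y)) / (1 - e*x))
   - ((1/24) * ((-y)^3 - (-y) - (e - inverse e) * (-y)^2)) * ((-x-y) * (1 + e*(-x-y)) / (1 - e*y))"
proof -
  define w where "w = (\<lambda>k::complex. k/24 + k^2/(24*e))"
  have t: "(1/24) * ((-k)^3 - (-k) - (e - inverse e) * (-k)^2) = (1 - e*k) * w k" for k
    unfolding w_def using e by (simp add: field_simps power2_eq_square power3_eq_cube)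
  have c1: "(1 - e*x) * w x * ((-x-y) * (1 + e*(-x-y)) / (1 - e*x)) = w x * ((-x-y) * (1 + e*(-x-y)))"
    using a by simp
  have c2: "(1 - e*y) * w y * ((-x-y) * (1 + e*(-x-y)) / (1 - e*y)) = w y * ((-x-y) * (1 + e*(-x-y)))"
    using b by simp
  have "(y - x) * ((1 - e*(x+y)) * w (x+y)) = w x * ((-x-y) * (1 + e*(-x-y))) - w y * ((-x-y) * (1 + e*(-x-y)))"
    unfolding w_def using e by (simp add: field_simps power2_eq_square)
  then show ?thesis unfolding t c1 c2 .
qed


definition T :: "complex \<Rightarrow> int \<Rightarrow> int \<Rightarrow> complex" where
  "T \<epsilon> = (\<lambda>m n. (1/24) * (of_int n ^ 3 - of_int n - (\<epsilon> - inverse \<epsilon>) * of_int n ^ 2) * kdelta (m + n) 0)"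

lemma nz': assumes "\<And>k. 1 + \<epsilon> * of_int k \<noteq> 0" shows "1 - \<epsilon> * of_int k \<noteq> 0"
  using assms[of "-k"] by simp

lemma T_ok:
  assumes nz: "\<And>k. 1 + \<epsilon> * of_int k \<noteq> 0" and e: "\<epsilon> \<noteq> 0"
  shows "cocycle_cond 0 \<epsilon> (T \<epsilon>)"
  unfolding cocycle_cond_def
proof (intro conjI allI)
  fix m n :: int
  show "T \<epsilon> m n - T \<epsilon> n m = (1/12) * (of_int n ^ 3 - of_int n) * kdelta (m + n) 0"
  proof (cases "m + n = 0")
    case True
    then have "m = -n" by simp
    then show ?thesis by (simp add: T_def kdelta_def algebra_simps power3_eq_cube power2_eq_square)
  next
    case False
    then show ?thesis by (simp add: T_def kdelta_def add.commute)
  qed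
next
  fix m n l :: int
  show "(of_int n - of_int m) * T \<epsilon> (m + n) l =
              T \<epsilon> m (n + l) * lsa_f 0 \<epsilon> n l - T \<epsilon> n (m + l) * lsa_f 0 \<epsilon> m l"
  proof (cases "m + n + l = 0")
    case False
    then have "m + (n + l) \<noteq> 0" "n + (m + l) \<noteq> 0" by auto
    with False show ?thesis by (simp add: T_def kdelta_def)
  next
    case True
    then have l: "l = - m - n" by simp
    have a: "1 - \<epsilon> * of_int m \<noteq> 0" "1 - \<epsilon> * of_int n \<noteq> 0" using nz' nz by blast+
    have "(of_int n - of_int m) * T \<epsilon> (m + n) (-m-n) =
              T \<epsilon> m (n + (-m-n)) * lsa_f 0 \<epsilon> n (-m-n) - T \<epsilon> n (m + (-m-n)) * lsa_f 0 \<epsilon> m (-m-n)"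
    proof -
      let ?x = "of_int m :: complex" and ?y = "of_int n :: complex"
      have tA: "T \<epsilon> (m + n) (-m-n) = (1/24) * ((-(?x+?y))^3 - (-(?x+?y)) - (\<epsilon> - inverse \<epsilon>) * (-(?x+?y))^2)"
        by (simp add: T_def kdelta_def)
      have tB: "T \<epsilon> m (n + (-m-n)) = (1/24) * ((-?x)^3 - (-?x) - (\<epsilon> - inverse \<epsilon>) * (-?x)^2)"
        by (simp add: T_def kdelta_def)
      have tC: "T \<epsilon> n (m + (-m-n)) = (1/24) * ((-?y)^3 - (-?y) - (\<epsilon> - inverse \<epsilon>) * (-?y)^2)"
        by (simp add: T_def kdelta_def)
      have fB: "lsa_f 0 \<epsilon> n (-m-n) = (-?x-?y) * (1 + \<epsilon>*(-?x-?y)) / (1 - \<epsilon>*?x)"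
        unfolding f_a0 by (simp add: algebra_simps)
      have fC: "lsa_f 0 \<epsilon> m (-m-n) = (-?x-?y) * (1 + \<epsilon>*(-?x-?y)) / (1 - \<epsilon>*?y)"
        unfolding f_a0 by (simp add: algebra_simps)
      show ?thesis unfolding tA tB tC fB fC by (rule iden[OF e a])
    qed
    then show ?thesis using l by simp
  qed
qed

lemma uniq:
  assumes nz: "\<And>k. 1 + \<epsilon> * of_int k \<noteq> 0" and e: "\<epsilon> \<noteq> 0" and c: "cocycle_cond 0 \<epsilon> \<omega>"
  shows "\<omega> = T \<epsilon>"
proof -
  from c have S: "\<And>m n. \<omega> m n - \<omega> n m = (1/12) * (of_int n ^ 3 - of_int n) * kdelta (m + n) 0"
   and E: "\<And>m n l. (of_int n - of_int m) * \<omega> (m + n) l =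
              \<omega> m (n + l) * lsa_f 0 \<epsilon> n l - \<omega> n (m + l) * lsa_f 0 \<epsilon> m l"
    unfolding cocycle_cond_def by blast+
  have nzm: "\<And>k. 1 - \<epsilon> * of_int k \<noteq> 0" using nz' nz by blast
  have f0l: "lsa_f 0 \<epsilon> 0 l = of_int l" for l using nz[of l] by (simp add: f_a0)
  have fk0: "lsa_f 0 \<epsilon> k 0 = 0" for k by (simp add: f_a0)
  have g0: "\<omega> k 0 = 0" if "k \<noteq> 0" for k
    using E[of 0 k 0] that by (simp add: f0l fk0)
  have h0: "\<omega> 0 k = 0" if "k \<noteq> 0" for k
    using S[of 0 k] g0[OF that] that by (simp add: kdelta_def)
  have off: "\<omega> n l = 0" if "n + l \<noteq> 0" for n l
  proof -
    have "of_int n * \<omega> n l = \<omega> 0 (n + l) * lsa_f 0 \<epsilon> n l - \<omega> n l * of_int l"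
      using E[of 0 n l] f0l by (simp add: algebra_simps)
    then have "of_int (n + l) * \<omega> n l = 0" using h0[OF that] by (simp add: algebra_simps)
    then show ?thesis using that by (metis mult_eq_0_iff of_int_eq_0_iff)
  qed
  define v where "v = (\<lambda>m. \<omega> m (-m) / (1 - \<epsilon> * of_int m))"
  have u: "\<omega> m (-m) = (1 - \<epsilon> * of_int m) * v m" for m using nzm[of m] by (simp add: v_def)
  have V: "(of_int n - of_int m) * v (m+n) = - of_int (m+n) * (v m - v n)" for m n
  proof -
    have "(of_int n - of_int m) * \<omega> (m + n) (-m-n) =
              \<omega> m (n + (-m-n)) * lsa_f 0 \<epsilon> n (-m-n) - \<omega> n (m + (-m-n)) * lsa_f 0 \<epsilon> m (-m-n)"
      by (rule E)
    then have H: "(of_int n - of_int m) * ((1 - \<epsilon> * of_int (m+n)) * v (m+n)) =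
              ((1 - \<epsilon> * of_int m) * v m) * (of_int (-m-n) * (1 - \<epsilon> * of_int (m+n)) / (1 - \<epsilon> * of_int m))
            - ((1 - \<epsilon> * of_int n) * v n) * (of_int (-m-n) * (1 - \<epsilon> * of_int (m+n)) / (1 - \<epsilon> * of_int n))"
      unfolding f_a0 u[symmetric] by (simp add: algebra_simps)
    have "(1 - \<epsilon> * of_int (m+n)) * ((of_int n - of_int m) * v (m+n)) =
               (1 - \<epsilon> * of_int (m+n)) * (- of_int (m+n) * (v m - v n))"
    proof -
      let ?X = "of_int (-m-n) * (1 - \<epsilon> * of_int (m+n)) :: complex"
      have c1: "((1 - \<epsilon> * of_int m) * v m) * (?X / (1 - \<epsilon> * of_int m)) = v m * ?X"
        using nzm[of m] by simp
      have c2: "((1 - \<epsilon> * of_int n) * v n) * (?X / (1 - \<epsilon> * of_int n)) = v n * ?X"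
        using nzm[of n] by simp
      from H show ?thesis unfolding c1 c2 by (simp add: algebra_simps)
    qed
    then show ?thesis using nzm[of "m+n"] by (metis mult_left_cancel)
  qed
  define w where "w = (\<lambda>m::int. of_int m / 24 + of_int m ^ 2 / (24 * \<epsilon>))"
  define d where "d = (\<lambda>m. v m - w m)"
  have Vd: "(of_int n - of_int m) * d (m+n) = - of_int (m+n) * (d m - d n)" for m n
  proof -
    have W: "(of_int n - of_int m) * w (m+n) = - of_int (m+n) * (w m - w n)"
      unfolding w_def using e by (simp add: field_simps power2_eq_square)
    have "(of_int n - of_int m) * v (m+n) - (of_int n - of_int m) * w (m+n) = - of_int (m+n) * (v m - v n) - (- of_int (m+n) * (w m - w n))"
      using V[of n m] W by simp
    then show ?thesis unfolding d_def by (simp add: algebra_simps)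
  qed
  have Sd: "(1 - \<epsilon> * of_int m) * d m - (1 + \<epsilon> * of_int m) * d (-m) = 0" for m
  proof -
    have "\<omega> m (-m) - \<omega> (-m) m = (1/12) * (of_int (-m) ^ 3 - of_int (-m))"
      using S[of m "-m"] by (simp add: kdelta_def)
    then have A: "(1 - \<epsilon> * of_int m) * v m - (1 + \<epsilon> * of_int m) * v (-m) = (1/12) * (of_int (-m) ^ 3 - of_int (-m))"
      using u[of m] u[of "-m"] by simp
    have B: "(1 - \<epsilon> * of_int m) * w m - (1 + \<epsilon> * of_int m) * w (-m) = (1/12) * (of_int (-m) ^ 3 - of_int (-m))"
      unfolding w_def using e by (simp add: field_simps power2_eq_square power3_eq_cube)
    have "((1 - \<epsilon> * of_int m) * v m - (1 + \<epsilon> * of_int m) * v (-m)) - ((1 - \<epsilon> * of_int m) * w m - (1 + \<epsilon> * of_int m) * w (-m)) = 0"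
      unfolding A B by simp
    then show ?thesis unfolding d_def by (simp add: algebra_simps)
  qed
  have d0: "d 0 = 0" using Vd[of 1 0] by simp
  have d2: "d 2 = 3 * d 1 + d (-1)" using Vd[of "-1" 2] by (simp add: algebra_simps)
  have dm2: "d (-2) = 3 * d (-1) + d 1" using Vd[of 1 "-2"] by (simp add: algebra_simps)
  have p1: "(1 - \<epsilon>) * d 1 = (1 + \<epsilon>) * d (-1)" using Sd[of 1] by simp
  have p2: "(1 - 2*\<epsilon>) * d 2 = (1 + 2*\<epsilon>) * d (-2)" using Sd[of 2] by (simp add: mult.commute)
  have q1: "d 1 - d (-1) = \<epsilon> * (d 1 + d (-1))" using p1 by (simp add: algebra_simps)
  have q2: "2 * (d 1 - d (-1)) = 8 * (\<epsilon> * (d 1 + d (-1)))" using p2 unfolding d2 dm2 by (simp add: algebra_simps)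
  have "2 * (\<epsilon> * (d 1 + d (-1))) = 8 * (\<epsilon> * (d 1 + d (-1)))" using q1 q2 by simp
  then have "3 * \<epsilon> * (d 1 + d (-1)) = 0" by simp
  then have "d 1 + d (-1) = 0" using e by simp
  then have s0: "d 1 + d (-1) = 0" .
  then have "d 1 - d (-1) = 0" using q1 by simp
  moreover have "2 * d 1 = (d 1 + d (-1)) + (d 1 - d (-1))" by simp
  ultimately have "2 * d 1 = 0" using s0 by simp
  then have d1: "d 1 = 0" by simp
  then have dm1: "d (-1) = 0" using s0 by simp
  have dpos: "d (int k) = 0" for k
  proof (induction k rule: nat_less_induct)
    case (1 k)
    show ?case
    proof (cases "k \<le> 2")
      case True
      then have "k = 0 \<or> k = 1 \<or> k = 2" by auto
      then show ?thesis using d0 d1 dm1 d2 by auto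
    next
      case False
      define j where "j = k - 1"
      have j: "k = j + 1" "j \<ge> 2" using False unfolding j_def by auto
      have "(1 - of_int (int j)) * d (int j + 1) = - of_int (int j + 1) * (d (int j) - d 1)"
        using Vd[where m="int j" and n=1] by simp
      moreover have "d (int j) = 0" using 1 j by auto
      ultimately have "(1 - of_int (int j)) * d (int j + 1) = 0" using d1 by simp
      moreover have "(1 - of_int (int j) :: complex) \<noteq> 0"
      proof
        assume "(1 - of_int (int j) :: complex) = 0"
        then have "(of_nat j :: complex) = of_nat 1" by simp
        then have "j = 1" by (simp only: of_nat_eq_iff)
        then show False using j(2) by simp
      qed
      ultimately show ?thesis using j by (simp add: add.commute)
    qed
  qed
  have dneg: "d (- int k) = 0" for k
  proof (induction k rule: nat_less_induct)
    case (1 k)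
    show ?case
    proof (cases "k \<le> 2")
      case True
      then have "k = 0 \<or> k = 1 \<or> k = 2" by auto
      then show ?thesis using d0 d1 dm1 dm2 by auto
    next
      case False
      define j where "j = k - 1"
      have j: "k = j + 1" "j \<ge> 2" using False unfolding j_def by auto
      have "(of_int (int j) - 1) * d (-1 - int j) = - of_int (-1 - int j) * (d (- int j) - d (-1))"
        using Vd[where m="- int j" and n="-1"] by (simp add: algebra_simps)
      moreover have "d (- int j) = 0" using 1 j by auto
      ultimately have "(of_int (int j) - 1) * d (-1 - int j) = 0" using dm1 by simp
      moreover have "(of_int (int j) - 1 :: complex) \<noteq> 0"
      proof
        assume "(of_int (int j) - 1 :: complex) = 0"
        then have "(of_nat j :: complex) = of_nat 1" by simp
        then have "j = 1" by (simp only: of_nat_eq_iff)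
        then show False using j(2) by simp
      qed
      ultimately show ?thesis using j by (simp add: algebra_simps)
    qed
  qed
  have dz: "d m = 0" for m
  proof (cases "m \<ge> 0")
    case True then show ?thesis using dpos[of "nat m"] by simp
  next
    case False then show ?thesis using dneg[of "nat (-m)"] by simp
  qed
  show ?thesis
  proof (intro ext)
    fix m n
    show "\<omega> m n = T \<epsilon> m n"
    proof (cases "m + n = 0")
      case False then show ?thesis using off[OF False] by (simp add: T_def kdelta_def)
    next
      case True
      then have n: "n = -m" by simp
      have "\<omega> m (-m) = (1 - \<epsilon> * of_int m) * w m" using u[of m] dz[of m] unfolding d_def by simp
      also have "\<dots> = T \<epsilon> m (-m)" unfolding w_def T_def kdelta_def using e
        by (simp add: field_simps power2_eq_square power3_eq_cube)
      finally show ?thesis using n by simp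
    qed
  qed
qed

theorem theorem4p1:
  fixes \<alpha> \<epsilon> :: complex
  assumes "\<epsilon> = 0 \<or> inverse \<epsilon> \<notin> \<int>"
  shows "((\<alpha> \<noteq> 0 \<or> \<epsilon> = 0) \<longrightarrow> \<not> (\<exists>\<omega>. cocycle_cond \<alpha> \<epsilon> \<omega>))
       \<and> ((\<alpha> = 0 \<and> \<epsilon> \<noteq> 0) \<longrightarrow>
           (\<forall>\<omega>. cocycle_cond \<alpha> \<epsilon> \<omega> \<longleftrightarrow>
              \<omega> = (\<lambda>m n. (1/24) * (of_int n ^ 3 - of_int n - (\<epsilon> - inverse \<epsilon>) * of_int n ^ 2)
                          * kdelta (m + n) 0)))"
proof -
  have nz: "\<And>k. 1 + \<epsilon> * of_int k \<noteq> 0" using nzk[OF assms] .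
  have eqT: "(\<lambda>m n. (1/24) * (of_int n ^ 3 - of_int n - (\<epsilon> - inverse \<epsilon>) * of_int n ^ 2)
                          * kdelta (m + n) 0) = T \<epsilon>" unfolding T_def by simp
  show ?thesis
  proof (intro conjI impI allI)
    assume H: "\<alpha> \<noteq> 0 \<or> \<epsilon> = 0"
    show "\<not> (\<exists>\<omega>. cocycle_cond \<alpha> \<epsilon> \<omega>)"
    proof
      assume "\<exists>\<omega>. cocycle_cond \<alpha> \<epsilon> \<omega>"
      then obtain \<omega> where c: "cocycle_cond \<alpha> \<epsilon> \<omega>" by blast
      show False
      proof (cases "\<alpha> = 0")
        case False
        show False by (rule no_alpha[OF nz False c])
      next
        case True
        then have "\<epsilon> = 0" using H by simp
        then show False using no_eps c True by simp
      qed
    qed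
  next
    fix \<omega>
    assume H: "\<alpha> = 0 \<and> \<epsilon> \<noteq> 0"
    then have a: "\<alpha> = 0" and e: "\<epsilon> \<noteq> 0" by auto
    show "cocycle_cond \<alpha> \<epsilon> \<omega> \<longleftrightarrow> \<omega> = (\<lambda>m n. (1/24) * (of_int n ^ 3 - of_int n - (\<epsilon> - inverse \<epsilon>) * of_int n ^ 2)
                          * kdelta (m + n) 0)"
      unfolding eqT a using uniq[OF nz e] T_ok[OF nz e] by blast
  qed
qed

end
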